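(* Suppose each population has a weakly dominating strategy, in the following sense: for population 1, either $a(r)\ge c(r)$ and $b(r)\ge d(r)$ for all $r\in[0,1]$ with both inequalities strict for all $r\in(0,1)$, or $c(r)\ge a(r)$ and $d(r)\ge b(r)$ for all $r\in[0,1]$ with both inequalities strict for all $r\in(0,1)$; and for population 2, either $e(r)\ge g(r)$ and $f(r)\ge k(r)$ for all $r\in[0,1]$ with both inequalities strict for all $r\in(0,1)$, or $g(r)\ge e(r)$ and $k(r)\ge f(r)$ for all $r\in[0,1]$ with both inequalities strict for all $r\in(0,1)$. Then for every initial condition $(x_0,y_0,r_0)\in(0,1)^3$, the solution $(x(t),y(t),r(t))$ of $(\ast)$ converges to the boundary of the cube $[0,1]^3$, i.e. its distance to $\partial[0,1]^3$ tends to $0$ as $t\to\infty$.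
   Context: Two-population co-evolutionary system. Let $a,b,c,d,e,f,g,k:[0,1]\to\mathbb{R}$ be affine functions of the environmental variable $r$. Population 1 has payoff matrix $A(r)=\begin{bmatrix}a(r)&b(r)\\ c(r)&d(r)\end{bmatrix}$, population 2 has payoff matrix $B(r)=\begin{bmatrix}e(r)&f(r)\\ g(r)&k(r)\end{bmatrix}$. Let $\theta_1,\theta_2>0$. The system $(\ast)$ on $[0,1]^3$ with state $(x,y,r)$ ($x$, $y$ the fractions of strategy 1 in populations 1 and 2, $r$ the environmental state) is $\dot x = x(1-x)F(y,r)$, $\dot y = y(1-y)G(x,r)$, $\dot r = r(1-r)H(x,y)$, where $F(y,r)=(a(r)-b(r)-c(r)+d(r))y+b(r)-d(r)$, $G(x,r)=(e(r)-f(r)-g(r)+k(r))x+f(r)-k(r)$, $H(x,y)=(1+\theta_1)x+(1+\theta_2)y-2$. *)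

theory Defs
  imports "HOL-Analysis.Analysis"
begin

definition affine_fun :: "(real \<Rightarrow> real) \<Rightarrow> bool" where
  "affine_fun h \<longleftrightarrow> (\<exists>p q. \<forall>r. h r = p + q * r)"

definition weakly_dominates :: "(real \<Rightarrow> real) \<Rightarrow> (real \<Rightarrow> real) \<Rightarrow> (real \<Rightarrow> real) \<Rightarrow> (real \<Rightarrow> real) \<Rightarrow> bool" where
  "weakly_dominates p1 p2 q1 q2 \<longleftrightarrow>
     (\<forall>r\<in>{0..1}. p1 r \<ge> q1 r \<and> p2 r \<ge> q2 r) \<and>
     (\<forall>r\<in>{0<..<1}. p1 r > q1 r \<and> p2 r > q2 r)"

definition unit_cube3 :: "(real \<times> real \<times> real) set" where
  "unit_cube3 = cbox (0,0,0) (1,1,1)"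

end

theory Submission
  imports Defs
begin

lemma mono_lemma:
  fixes f f' :: "real \<Rightarrow> real"
  assumes d: "\<And>t. t \<ge> 0 \<Longrightarrow> (f has_real_derivative f' t) (at t within {0..})"
    and s: "0 \<le> s" "s \<le> u" and nn: "\<And>t. s < t \<Longrightarrow> t < u \<Longrightarrow> f' t \<ge> 0"
  shows "f s \<le> f u"
proof -
  have c: "continuous_on {0..} f" by (rule DERIV_continuous_on) (use d in auto)
  have "continuous_on {s..u} f" using continuous_on_subset[OF c] s by auto
  moreover have "(f has_real_derivative f' t) (at t)" if "s < t" for t
  proof -
    have "at t within {0..} = at t" using that s by (intro at_within_interior) auto
    with d[of t] that s show ?thesis by auto
  qed
  ultimately show ?thesis using nn s
    by (intro DERIV_nonneg_imp_increasing_open[OF s(2)]) (auto simp del: greaterThanLessThan_iff)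
qed

lemma pos_lemma:
  fixes z D :: "real \<Rightarrow> real"
  assumes d: "\<And>t. t \<ge> 0 \<Longrightarrow> (z has_real_derivative D t) (at t within {0..})"
    and T: "T \<ge> 0" and K: "K \<ge> 0"
    and h: "\<And>t. 0 < t \<Longrightarrow> t < T \<Longrightarrow> D t \<ge> - K * z t"
    and z0: "z 0 > 0"
  shows "z T > 0"
proof -
  let ?f = "\<lambda>t. z t * exp (K * t)"
  have "?f 0 \<le> ?f T"
  proof (rule mono_lemma[where f' = "\<lambda>t. exp (K*t) * (D t + K * z t)" and f = "\<lambda>t. z t * exp (K * t)"])
    fix t :: real assume "t \<ge> 0"
    show "(?f has_real_derivative exp (K*t) * (D t + K * z t)) (at t within {0..})"
      by (rule derivative_eq_intros refl d[OF \<open>t\<ge>0\<close>])+ (simp add: algebra_simps)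
  next
    fix t assume "0 < t" "t < T"
    then show "exp (K*t) * (D t + K * z t) \<ge> 0" using h[of t] by simp
  qed (use T in auto)
  then have "z 0 \<le> z T * exp (K*T)" by simp
  with z0 have "z T * exp (K*T) > 0" by linarith
  then show ?thesis by (simp add: zero_less_mult_iff)
qed

lemma aff_bound: "affine_fun h \<Longrightarrow> \<exists>C. \<forall>r\<in>{0..1}. \<bar>h r\<bar> \<le> C"
proof -
  assume "affine_fun h"
  then obtain p q where h: "\<And>r. h r = p + q * r" unfolding affine_fun_def by blast
  have "\<bar>h r\<bar> \<le> \<bar>p\<bar> + \<bar>q\<bar>" if "r \<in> {0..1}" for r
  proof -
    have "\<bar>q * r\<bar> \<le> \<bar>q\<bar>" using that by (simp add: abs_mult mult_left_le)
    then show ?thesis unfolding h by linarith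
  qed
  then show ?thesis by blast
qed

lemma aff_min:
  assumes "affine_fun h" "\<alpha> \<le> r" "r \<le> \<beta>"
  shows "h r \<ge> min (h \<alpha>) (h \<beta>)"
proof -
  obtain p q where h: "\<And>r. h r = p + q * r" using assms(1) unfolding affine_fun_def by blast
  show ?thesis
  proof (cases "q \<ge> 0")
    case True
    then have "q * \<alpha> \<le> q * r" using assms by (simp add: mult_left_mono)
    then show ?thesis unfolding h by linarith
  next
    case False
    then have "q * \<beta> \<le> q * r" using assms by (simp add: mult_left_mono_neg)
    then show ?thesis unfolding h by linarith
  qed
qed

lemma F_bound:
  assumes "affine_fun a" "affine_fun b" "affine_fun c" "affine_fun d"
  shows "\<exists>K\<ge>0. \<forall>y\<in>{0..1}. \<forall>r\<in>{0..1}. \<bar>(a r - b r - c r + d r) * y + b r - d r\<bar> \<le> K"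
proof -
  obtain Ca Cb Cc Cd where C: "\<forall>r\<in>{0..1}. \<bar>a r\<bar> \<le> Ca" "\<forall>r\<in>{0..1}. \<bar>b r\<bar> \<le> Cb"
    "\<forall>r\<in>{0..1}. \<bar>c r\<bar> \<le> Cc" "\<forall>r\<in>{0..1}. \<bar>d r\<bar> \<le> Cd"
    using aff_bound assms by metis
  have "\<bar>(a r - b r - c r + d r) * y + b r - d r\<bar> \<le> Ca + 2*Cb + Cc + 2*Cd"
    if "y \<in> {0..1}" "r \<in> {0..1}" for y r
  proof -
    have 1: "\<bar>(a r - b r - c r + d r) * y\<bar> \<le> \<bar>a r - b r - c r + d r\<bar>"
      using that by (simp add: abs_mult mult_left_le)
    have 2: "\<bar>a r\<bar> \<le> Ca" "\<bar>b r\<bar> \<le> Cb" "\<bar>c r\<bar> \<le> Cc" "\<bar>d r\<bar> \<le> Cd" using C that by blast+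
    have 3: "\<bar>a r - b r - c r + d r\<bar> \<le> Ca + Cb + Cc + Cd" using 2 unfolding abs_le_iff by linarith
    show ?thesis using 1 2 3 unfolding abs_le_iff by linarith
  qed
  moreover have "Ca + 2*Cb + Cc + 2*Cd \<ge> 0"
  proof -
    have "\<bar>a 0\<bar> \<le> Ca" "\<bar>b 0\<bar> \<le> Cb" "\<bar>c 0\<bar> \<le> Cc" "\<bar>d 0\<bar> \<le> Cd" using C by auto
    then show ?thesis by linarith
  qed
  ultimately show ?thesis by blast
qed

lemma lower1:
  fixes z F K :: real
  assumes z: "0 \<le> z" "z \<le> 1" and FK: "\<bar>F\<bar> \<le> K"
  shows "z * (1 - z) * F \<ge> - K * z" and "- (z * (1 - z) * F) \<ge> - K * (1 - z)"
proof -
  have K: "K \<ge> 0" using FK by linarith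
  have a: "z*(1-z) \<ge> 0" "z*(1-z) \<le> z" "z*(1-z) \<le> 1 - z" using z
    by (simp_all add: mult_left_le mult_left_le_one_le mult.commute[of z])
  have "\<bar>z * (1 - z) * F\<bar> = z*(1-z)*\<bar>F\<bar>" by (simp only: abs_mult[of "z*(1-z)" F] abs_of_nonneg[OF a(1)])
  also have "\<dots> \<le> z*(1-z)*K" by (rule mult_left_mono[OF FK a(1)])
  finally have 1: "\<bar>z * (1 - z) * F\<bar> \<le> z*(1-z)*K" .
  have 2: "z*(1-z)*K \<le> z*K" by (rule mult_right_mono[OF a(2) K])
  have 3: "z*(1-z)*K \<le> (1-z)*K" by (rule mult_right_mono[OF a(3) K])
  show "z * (1 - z) * F \<ge> - K * z" using 1 2 mult.commute[of z K] unfolding abs_le_iff by linarith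
  show "- (z * (1 - z) * F) \<ge> - K * (1 - z)" using 1 3 mult.commute[of "1-z" K] unfolding abs_le_iff by linarith
qed


lemma core:
  fixes x y r p q :: "real \<Rightarrow> real" and L \<epsilon> :: real
  assumes affp: "affine_fun p" and affq: "affine_fun q"
   and pos0: "\<And>s. s\<in>{0..1} \<Longrightarrow> p s \<ge> 0 \<and> q s \<ge> 0"
   and pos1: "\<And>s. s\<in>{0<..<1} \<Longrightarrow> p s > 0 \<and> q s > 0"
   and inv: "\<And>t. t\<ge>0 \<Longrightarrow> x t \<in> {0<..<1} \<and> y t \<in> {0..1} \<and> r t \<in> {0..1}"
   and ode: "\<And>t. t\<ge>0 \<Longrightarrow> (x has_real_derivative x t * (1 - x t) * (y t * p (r t) + (1 - y t) * q (r t))) (at t within {0..})"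
   and lip: "\<And>t s. 0 \<le> t \<Longrightarrow> t \<le> s \<Longrightarrow> \<bar>r s - r t\<bar> \<le> L * (s - t)"
   and L: "L > 0" and eps: "0 < \<epsilon>" "\<epsilon> \<le> 1/4"
  shows "\<exists>N. \<forall>t\<ge>N. x t < \<epsilon> \<or> 1 - x t < \<epsilon> \<or> r t < \<epsilon> \<or> 1 - r t < \<epsilon>"
proof (rule ccontr)
  assume "\<not> ?thesis"
  then have fr: "\<exists>t\<ge>N. \<epsilon> \<le> x t \<and> x t \<le> 1-\<epsilon> \<and> \<epsilon> \<le> r t \<and> r t \<le> 1 - \<epsilon>" for N
    by (force simp: not_less)
  define U where "U t = ln (x t) - ln (1 - x t)" for t
  define Fx where "Fx t = y t * p (r t) + (1 - y t) * q (r t)" for t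
  have dU: "(U has_real_derivative Fx t) (at t within {0..})" if "t \<ge> 0" for t
  proof -
    have xt: "0 < x t" "x t < 1" using inv[OF that] by auto
    let ?X = "x t * (1 - x t) * Fx t"
    have dx: "(x has_real_derivative ?X) (at t within {0..})" using ode[OF that] unfolding Fx_def .
    have d1: "((\<lambda>s. ln (x s)) has_real_derivative inverse (x t) * ?X) (at t within {0..})"
      by (rule DERIV_chain2[OF DERIV_ln dx]) (use xt in auto)
    have dx2: "((\<lambda>s. 1 - x s) has_real_derivative - ?X) (at t within {0..})"
      using DERIV_diff[OF DERIV_const dx] by simp
    have d2: "((\<lambda>s. ln (1 - x s)) has_real_derivative inverse (1 - x t) * (- ?X)) (at t within {0..})"
      by (rule DERIV_chain2[OF DERIV_ln dx2]) (use xt in auto)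
    have "(U has_real_derivative inverse (x t) * ?X - inverse (1 - x t) * (- ?X)) (at t within {0..})"
      unfolding U_def[abs_def] by (rule DERIV_diff[OF d1 d2])
    then show ?thesis by (rule DERIV_cong) (use xt in \<open>simp add: field_simps\<close>)
  qed
  have Fx_nn: "Fx t \<ge> 0" if "t \<ge> 0" for t
  proof -
    have "0 \<le> y t" "y t \<le> 1" "r t \<in> {0..1}" using inv[OF that] by auto
    moreover have "p (r t) \<ge> 0" "q (r t) \<ge> 0" using pos0 calculation(3) by blast+
    ultimately show ?thesis unfolding Fx_def by (intro add_nonneg_nonneg mult_nonneg_nonneg) auto
  qed
  have Umono: "U s \<le> U u" if "0 \<le> s" "s \<le> u" for s u
    by (rule mono_lemma[where f'=Fx and f=U]) (use dU Fx_nn that in auto)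
  define B where "B = ln (1-\<epsilon>) - ln \<epsilon>"
  have UB: "U t \<le> B" if "t \<ge> 0" for t
  proof -
    obtain t' where t': "t' \<ge> t" "\<epsilon> \<le> x t'" "x t' \<le> 1-\<epsilon>" using fr[of t] by blast
    have "U t \<le> U t'" using Umono that t' by auto
    also have "U t' \<le> B"
    proof -
      have xt: "0 < x t'" "x t' < 1" using inv[of t'] t' that by auto
      have "ln (x t') \<le> ln (1-\<epsilon>)" using xt t' eps by (subst ln_le_cancel_iff) auto
      moreover have "ln \<epsilon> \<le> ln (1 - x t')" using xt t' eps by (subst ln_le_cancel_iff) auto
      ultimately show ?thesis unfolding U_def B_def by linarith
    qed
    finally show ?thesis .
  qed
  define m where "m = min (min (p (\<epsilon>/2)) (p (1-\<epsilon>/2))) (min (q (\<epsilon>/2)) (q (1-\<epsilon>/2)))"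
  have m: "m > 0"
  proof -
    have "\<epsilon>/2 \<in> {0<..<1}" "1-\<epsilon>/2 \<in> {0<..<1}" using eps by auto
    then have "p (\<epsilon>/2) > 0" "q (\<epsilon>/2) > 0" "p (1-\<epsilon>/2) > 0" "q (1-\<epsilon>/2) > 0" using pos1 by blast+
    then show ?thesis unfolding m_def by simp
  qed
  have Fm: "Fx t \<ge> m" if "t \<ge> 0" "\<epsilon>/2 \<le> r t" "r t \<le> 1-\<epsilon>/2" for t
  proof -
    have "p (r t) \<ge> m" "q (r t) \<ge> m" unfolding m_def
      using aff_min[OF affp that(2,3)] aff_min[OF affq that(2,3)] by auto
    moreover have "0 \<le> y t" "y t \<le> 1" using inv[OF that(1)] by auto
    ultimately have "y t * p (r t) \<ge> y t * m" "(1 - y t) * q (r t) \<ge> (1 - y t) * m"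
      by (auto intro!: mult_left_mono)
    then show ?thesis unfolding Fx_def by (simp add: algebra_simps)
  qed
  define h where "h = \<epsilon>/(2*L)"
  have h: "h > 0" "L * h = \<epsilon>/2" unfolding h_def using L eps by auto
  have step: "U (t+h) \<ge> U t + m*h" if t: "t\<ge>0" "\<epsilon> \<le> r t" "r t \<le> 1-\<epsilon>" for t
  proof -
    have "U t - m*t \<le> U (t+h) - m*(t+h)"
    proof (rule mono_lemma[where f' = "\<lambda>s. Fx s - m" and f = "\<lambda>v. U v - m * v"])
      fix s :: real assume "s \<ge> 0"
      show "((\<lambda>s. U s - m * s) has_real_derivative Fx s - m) (at s within {0..})"
        by (rule derivative_eq_intros refl dU[OF \<open>s\<ge>0\<close>])+ simp
    next
      fix s assume s: "t < s" "s < t + h"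
      have "\<bar>r s - r t\<bar> \<le> L * (s - t)" using lip[of t s] s t by auto
      also have "\<dots> \<le> L * h" using s L by (intro mult_left_mono) auto
      finally have "\<bar>r s - r t\<bar> \<le> \<epsilon>/2" using h by simp
      then have "\<epsilon>/2 \<le> r s" "r s \<le> 1-\<epsilon>/2" using t unfolding abs_le_iff by linarith+
      moreover have "s \<ge> 0" using s t by linarith
      ultimately show "Fx s - m \<ge> 0" using Fm[of s] by linarith
    qed (use t h in linarith)+
    then show ?thesis by (simp add: algebra_simps)
  qed
  have grow: "\<exists>t\<ge>0. U t \<ge> U 0 + real n * (m*h)" for n :: nat
  proof (induction n)
    case 0 show ?case by auto
  next
    case (Suc n)
    then obtain t where t: "t \<ge> 0" "U t \<ge> U 0 + real n * (m*h)" by blast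
    obtain t' where t': "t' \<ge> t" "\<epsilon> \<le> r t'" "r t' \<le> 1-\<epsilon>" using fr[of t] by blast
    have "U t \<le> U t'" using Umono t t' by auto
    moreover have "U (t'+h) \<ge> U t' + m*h" using step t t' by auto
    ultimately have "U (t'+h) \<ge> U 0 + real (Suc n) * (m*h)" using t by (simp add: algebra_simps)
    moreover have "t' + h \<ge> 0" using t t' h by auto
    ultimately show ?case by blast
  qed
  have "m*h > 0" using m h by auto
  then obtain n :: nat where n: "B - U 0 < real n * (m*h)" using reals_Archimedean3 by blast
  obtain t where "t \<ge> 0" "U t \<ge> U 0 + real n * (m*h)" using grow by blast
  with UB[of t] n show False by auto
qed


lemma infdist_cube:
  assumes "x\<in>{0..1}" "y\<in>{0..1}" "r\<in>{0..1}"
  shows "infdist (x,y,r) (frontier unit_cube3) \<le> min (min x (1-x)) (min r (1-r))"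
proof -
  have fr: "frontier unit_cube3 = cbox (0,0,0) (1,1,1) - box (0,0,0) (1,1,1)"
    unfolding unit_cube3_def by (rule frontier_cbox)
  have m: "(0,y,r) \<in> frontier unit_cube3" "(1,y,r) \<in> frontier unit_cube3"
    "(x,y,0) \<in> frontier unit_cube3" "(x,y,1) \<in> frontier unit_cube3"
    unfolding fr using assms by (auto simp: mem_box Basis_prod_def)
  have "infdist (x,y,r) (frontier unit_cube3) \<le> dist (x,y,r) (0,y,r)" by (rule infdist_le[OF m(1)])
  moreover have "infdist (x,y,r) (frontier unit_cube3) \<le> dist (x,y,r) (1,y,r)" by (rule infdist_le[OF m(2)])
  moreover have "infdist (x,y,r) (frontier unit_cube3) \<le> dist (x,y,r) (x,y,0)" by (rule infdist_le[OF m(3)])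
  moreover have "infdist (x,y,r) (frontier unit_cube3) \<le> dist (x,y,r) (x,y,1)" by (rule infdist_le[OF m(4)])
  ultimately show ?thesis using assms by (simp add: dist_Pair_Pair dist_real_def)
qed


lemma aff_diff: "affine_fun h1 \<Longrightarrow> affine_fun h2 \<Longrightarrow> affine_fun (\<lambda>s. h1 s - h2 s)"
  unfolding affine_fun_def by (metis (no_types) add_diff_add left_diff_distrib)

theorem theorem1:
  fixes a b c d e f g k :: "real \<Rightarrow> real"
    and \<theta>1 \<theta>2 :: real
    and x y r :: "real \<Rightarrow> real"
  assumes aff: "affine_fun a" "affine_fun b" "affine_fun c" "affine_fun d"
               "affine_fun e" "affine_fun f" "affine_fun g" "affine_fun k"
    and theta: "\<theta>1 > 0" "\<theta>2 > 0"
    and dom1: "weakly_dominates a b c d \<or> weakly_dominates c d a b"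
    and dom2: "weakly_dominates e f g k \<or> weakly_dominates g k e f"
    and init: "x 0 \<in> {0<..<1}" "y 0 \<in> {0<..<1}" "r 0 \<in> {0<..<1}"
    and ode_x: "\<And>t. t \<ge> 0 \<Longrightarrow> (x has_real_derivative
        x t * (1 - x t) * ((a (r t) - b (r t) - c (r t) + d (r t)) * y t + b (r t) - d (r t)))
        (at t within {0..})"
    and ode_y: "\<And>t. t \<ge> 0 \<Longrightarrow> (y has_real_derivative
        y t * (1 - y t) * ((e (r t) - f (r t) - g (r t) + k (r t)) * x t + f (r t) - k (r t)))
        (at t within {0..})"
    and ode_r: "\<And>t. t \<ge> 0 \<Longrightarrow> (r has_real_derivative
        r t * (1 - r t) * ((1 + \<theta>1) * x t + (1 + \<theta>2) * y t - 2))
        (at t within {0..})"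
  shows "((\<lambda>t. infdist (x t, y t, r t) (frontier unit_cube3)) \<longlongrightarrow> 0) at_top"
proof -
  define F where "F t = (a (r t) - b (r t) - c (r t) + d (r t)) * y t + b (r t) - d (r t)" for t
  define G where "G t = (e (r t) - f (r t) - g (r t) + k (r t)) * x t + f (r t) - k (r t)" for t
  define H where "H t = (1 + \<theta>1) * x t + (1 + \<theta>2) * y t - 2" for t
  obtain K1 where K1: "K1 \<ge> 0" "\<forall>y\<in>{0..1}. \<forall>r\<in>{0..1}. \<bar>(a r - b r - c r + d r) * y + b r - d r\<bar> \<le> K1"
    using F_bound[OF aff(1-4)] by blast
  obtain K2 where K2: "K2 \<ge> 0" "\<forall>y\<in>{0..1}. \<forall>r\<in>{0..1}. \<bar>(e r - f r - g r + k r) * y + f r - k r\<bar> \<le> K2"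
    using F_bound[OF aff(5-8)] by blast
  define L where "L = 2 + \<theta>1 + \<theta>2"
  have L: "L > 0" unfolding L_def using theta by auto
  define K where "K = max K1 (max K2 L)"
  have K: "K \<ge> 0" unfolding K_def using K1 by auto
  define P where "P t \<longleftrightarrow> x t \<in> {0<..<1} \<and> y t \<in> {0<..<1} \<and> r t \<in> {0<..<1}" for t
  have bnds: "\<bar>F t\<bar> \<le> K \<and> \<bar>G t\<bar> \<le> K \<and> \<bar>H t\<bar> \<le> K \<and> \<bar>H t\<bar> \<le> L" if "P t" for t
  proof -
    have i: "x t \<in> {0..1}" "y t \<in> {0..1}" "r t \<in> {0..1}" using that unfolding P_def by auto
    have "\<bar>F t\<bar> \<le> K1" using K1(2) i unfolding F_def by blast
    moreover have "\<bar>G t\<bar> \<le> K2" using K2(2) i unfolding G_def by blast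
    moreover have "\<bar>H t\<bar> \<le> L"
    proof -
      have "(1 + \<theta>1) * x t \<le> 1 + \<theta>1" "(1 + \<theta>2) * y t \<le> 1 + \<theta>2"
           "(1 + \<theta>1) * x t \<ge> 0" "(1 + \<theta>2) * y t \<ge> 0"
        using i theta by (auto simp: mult_left_le)
      then show ?thesis unfolding H_def L_def abs_le_iff using theta by (intro conjI; linarith)
    qed
    ultimately show ?thesis unfolding K_def by auto
  qed
  have dx: "(x has_real_derivative x t * (1 - x t) * F t) (at t within {0..})" if "t \<ge> 0" for t
    using ode_x[OF that] unfolding F_def .
  have dy: "(y has_real_derivative y t * (1 - y t) * G t) (at t within {0..})" if "t \<ge> 0" for t
    using ode_y[OF that] unfolding G_def .
  have dr: "(r has_real_derivative r t * (1 - r t) * H t) (at t within {0..})" if "t \<ge> 0" for t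
    using ode_r[OF that] unfolding H_def .
  have neg: "((\<lambda>s. 1 - z s) has_real_derivative - (z t * (1 - z t) * W)) (at t within {0..})"
    if "(z has_real_derivative z t * (1 - z t) * W) (at t within {0..})" for z :: "real \<Rightarrow> real" and W t
    using DERIV_diff[OF DERIV_const that] by simp
  have cx: "continuous_on {0..} x" by (rule DERIV_continuous_on) (use dx in auto)
  have cy: "continuous_on {0..} y" by (rule DERIV_continuous_on) (use dy in auto)
  have cr: "continuous_on {0..} r" by (rule DERIV_continuous_on) (use dr in auto)
  have inv: "P t" if "t \<ge> 0" for t
  proof (rule ccontr)
    assume nP: "\<not> P t"
    define S where "S = {t. 0 \<le> t \<and> \<not> P t}"
    define ts where "ts = Inf S"
    have ne: "S \<noteq> {}" using nP that unfolding S_def by auto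
    have bdd: "bdd_below S" unfolding S_def by (auto intro: bdd_belowI[of _ 0])
    have ts0: "ts \<ge> 0" unfolding ts_def by (rule cInf_greatest[OF ne]) (auto simp: S_def)
    have before: "P s" if "0 \<le> s" "s < ts" for s
    proof (rule ccontr)
      assume "\<not> P s"
      then have "s \<in> S" using that unfolding S_def by auto
      then have "ts \<le> s" unfolding ts_def by (rule cInf_lower[OF _ bdd])
      with that show False by auto
    qed
    have bb: "\<bar>F s\<bar> \<le> K" "\<bar>G s\<bar> \<le> K" "\<bar>H s\<bar> \<le> K" "x s \<in> {0<..<1}" "y s \<in> {0<..<1}" "r s \<in> {0<..<1}"
      if "0 < s" "s < ts" for s
      using bnds[OF before[of s]] before[of s] that unfolding P_def by auto
    have "x ts > 0"
    proof (rule pos_lemma[OF dx ts0 K])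
      fix s assume s: "0 < s" "s < ts"
      show "- K * x s \<le> x s * (1 - x s) * F s" using bb[OF s] by (intro lower1(1)) auto
    qed (use init in auto)
    moreover have "1 - x ts > 0"
    proof (rule pos_lemma[where z = "\<lambda>s. 1 - x s", OF neg[OF dx] ts0 K])
      fix s assume s: "0 < s" "s < ts"
      show "- K * (1 - x s) \<le> - (x s * (1 - x s) * F s)" using bb[OF s] by (intro lower1(2)) auto
    qed (use init in auto)
    moreover have "y ts > 0"
    proof (rule pos_lemma[OF dy ts0 K])
      fix s assume s: "0 < s" "s < ts"
      show "- K * y s \<le> y s * (1 - y s) * G s" using bb[OF s] by (intro lower1(1)) auto
    qed (use init in auto)
    moreover have "1 - y ts > 0"
    proof (rule pos_lemma[where z = "\<lambda>s. 1 - y s", OF neg[OF dy] ts0 K])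
      fix s assume s: "0 < s" "s < ts"
      show "- K * (1 - y s) \<le> - (y s * (1 - y s) * G s)" using bb[OF s] by (intro lower1(2)) auto
    qed (use init in auto)
    moreover have "r ts > 0"
    proof (rule pos_lemma[OF dr ts0 K])
      fix s assume s: "0 < s" "s < ts"
      show "- K * r s \<le> r s * (1 - r s) * H s" using bb[OF s] by (intro lower1(1)) auto
    qed (use init in auto)
    moreover have "1 - r ts > 0"
    proof (rule pos_lemma[where z = "\<lambda>s. 1 - r s", OF neg[OF dr] ts0 K])
      fix s assume s: "0 < s" "s < ts"
      show "- K * (1 - r s) \<le> - (r s * (1 - r s) * H s)" using bb[OF s] by (intro lower1(2)) auto
    qed (use init in auto)
    ultimately have Pts: "P ts" unfolding P_def by auto
    have tl: "(x \<longlongrightarrow> x ts) (at ts within {0..})" "(y \<longlongrightarrow> y ts) (at ts within {0..})"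
      "(r \<longlongrightarrow> r ts) (at ts within {0..})"
      using cx cy cr ts0 unfolding continuous_on_def by auto
    have "eventually P (at ts within {0..})"
      using Pts unfolding P_def
      by (auto intro!: eventually_conj order_tendstoD[OF tl(1)] order_tendstoD[OF tl(2)] order_tendstoD[OF tl(3)])
    then obtain \<delta> where \<delta>: "\<delta> > 0" "\<And>s. s \<in> {0..} \<Longrightarrow> s \<noteq> ts \<Longrightarrow> dist s ts < \<delta> \<Longrightarrow> P s"
      unfolding eventually_at by blast
    have "ts + \<delta> \<le> ts" unfolding ts_def
    proof (rule cInf_greatest[OF ne])
      fix s assume s: "s \<in> S"
      then have "ts \<le> s" unfolding ts_def by (rule cInf_lower[OF _ bdd])
      moreover have "s \<noteq> ts" using s Pts unfolding S_def by auto
      moreover have "\<not> P s" "s \<ge> 0" using s unfolding S_def by auto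
      ultimately show "Inf S + \<delta> \<le> s" using \<delta>(2)[of s] unfolding ts_def by (force simp: dist_real_def)
    qed
    with \<delta> show False by auto
  qed
  have Hb: "\<bar>r u * (1 - r u) * H u\<bar> \<le> L" if "u \<ge> 0" for u
  proof -
    have "P u" using inv that by auto
    then have HL: "\<bar>H u\<bar> \<le> L" and ru: "0 \<le> r u" "r u \<le> 1" using bnds unfolding P_def by auto
    have 1: "- L * r u \<le> r u * (1 - r u) * H u" "- L * (1 - r u) \<le> - (r u * (1 - r u) * H u)"
      using lower1[OF ru HL] by auto
    have 2: "L * r u \<le> L" "L * (1 - r u) \<le> L" using ru L by (simp_all add: mult_left_le)
    show ?thesis using 1 2 unfolding abs_le_iff by linarith
  qed
  have lip: "\<bar>r s - r t\<bar> \<le> L * (s - t)" if "0 \<le> t" "t \<le> s" for t s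
  proof -
    have A: "L * t - r t \<le> L * s - r s"
    proof (rule mono_lemma[where f' = "\<lambda>u. L - r u * (1 - r u) * H u" and f = "\<lambda>v. L * v - r v"])
      fix u :: real assume "u \<ge> 0"
      show "((\<lambda>v. L * v - r v) has_real_derivative L - r u * (1 - r u) * H u) (at u within {0..})"
        by (rule derivative_eq_intros refl dr[OF \<open>u\<ge>0\<close>])+ simp
    next
      fix u assume u: "t < u" "u < s"
      then have "\<bar>r u * (1 - r u) * H u\<bar> \<le> L" using Hb that by auto
      then show "L - r u * (1 - r u) * H u \<ge> 0" unfolding abs_le_iff by linarith
    qed (use that in auto)
    have B: "L * t + r t \<le> L * s + r s"
    proof (rule mono_lemma[where f' = "\<lambda>u. L + r u * (1 - r u) * H u" and f = "\<lambda>v. L * v + r v"])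
      fix u :: real assume "u \<ge> 0"
      show "((\<lambda>v. L * v + r v) has_real_derivative L + r u * (1 - r u) * H u) (at u within {0..})"
        by (rule derivative_eq_intros refl dr[OF \<open>u\<ge>0\<close>])+ simp
    next
      fix u assume u: "t < u" "u < s"
      then have "\<bar>r u * (1 - r u) * H u\<bar> \<le> L" using Hb that by auto
      then show "L + r u * (1 - r u) * H u \<ge> 0" unfolding abs_le_iff by linarith
    qed (use that in auto)
    show ?thesis using A B unfolding abs_le_iff right_diff_distrib by linarith
  qed
  have invb: "x t \<in> {0<..<1} \<and> y t \<in> {0..1} \<and> r t \<in> {0..1}" if "t \<ge> 0" for t
    using inv[OF that] unfolding P_def by auto
  have invb2: "1 - x t \<in> {0<..<1} \<and> y t \<in> {0..1} \<and> r t \<in> {0..1}" if "t \<ge> 0" for t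
    using inv[OF that] unfolding P_def by auto
  have ev: "\<exists>N. \<forall>t\<ge>N. x t < \<epsilon> \<or> 1 - x t < \<epsilon> \<or> r t < \<epsilon> \<or> 1 - r t < \<epsilon>"
    if eps: "0 < \<epsilon>" "\<epsilon> \<le> 1/4" for \<epsilon>
    using dom1
  proof
    assume W: "weakly_dominates a b c d"
    show ?thesis
    proof (rule core[where p = "\<lambda>s. a s - c s" and q = "\<lambda>s. b s - d s" and y = y, OF _ _ _ _ _ _ lip L eps])
      show "affine_fun (\<lambda>s. a s - c s)" "affine_fun (\<lambda>s. b s - d s)" using aff aff_diff by auto
      fix t :: real assume t: "t \<ge> 0"
      show "(x has_real_derivative x t * (1 - x t) * (y t * (a (r t) - c (r t)) + (1 - y t) * (b (r t) - d (r t)))) (at t within {0..})"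
        using dx[OF t] by (rule DERIV_cong) (simp add: F_def algebra_simps)
    next
      fix t :: real assume "t \<ge> 0" then show "x t \<in> {0<..<1} \<and> y t \<in> {0..1} \<and> r t \<in> {0..1}" by (rule invb)
    qed (use W in \<open>auto simp: weakly_dominates_def\<close>)
  next
    assume W: "weakly_dominates c d a b"
    have "\<exists>N. \<forall>t\<ge>N. 1 - x t < \<epsilon> \<or> 1 - (1 - x t) < \<epsilon> \<or> r t < \<epsilon> \<or> 1 - r t < \<epsilon>"
    proof (rule core[where x = "\<lambda>t. 1 - x t" and p = "\<lambda>s. c s - a s" and q = "\<lambda>s. d s - b s" and y = y, OF _ _ _ _ _ _ lip L eps])
      show "affine_fun (\<lambda>s. c s - a s)" "affine_fun (\<lambda>s. d s - b s)" using aff aff_diff by auto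
      fix t :: real assume t: "t \<ge> 0"
      show "((\<lambda>t. 1 - x t) has_real_derivative (1 - x t) * (1 - (1 - x t)) * (y t * (c (r t) - a (r t)) + (1 - y t) * (d (r t) - b (r t)))) (at t within {0..})"
        using neg[OF dx[OF t]] by (rule DERIV_cong) (simp add: F_def algebra_simps)
    next
      fix t :: real assume "t \<ge> 0" then show "1 - x t \<in> {0<..<1} \<and> y t \<in> {0..1} \<and> r t \<in> {0..1}" by (rule invb2)
    qed (use W in \<open>auto simp: weakly_dominates_def\<close>)
    then show ?thesis by auto
  qed
  show ?thesis unfolding tendsto_iff
  proof (intro allI impI)
    fix e :: real assume e: "e > 0"
    obtain N where N: "\<forall>t\<ge>N. x t < min e (1/4) \<or> 1 - x t < min e (1/4) \<or> r t < min e (1/4) \<or> 1 - r t < min e (1/4)"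
    proof -
      have "0 < min e (1/4)" "min e (1/4) \<le> 1/4" using e by auto
      from ev[OF this] show ?thesis using that by blast
    qed
    show "\<forall>\<^sub>F t in at_top. dist (infdist (x t, y t, r t) (frontier unit_cube3)) 0 < e"
      unfolding eventually_at_top_linorder
    proof (intro exI allI impI)
      fix t assume t: "t \<ge> max N 0"
      then have "P t" using inv by auto
      then have i: "x t \<in> {0..1}" "y t \<in> {0..1}" "r t \<in> {0..1}" unfolding P_def by auto
      have "infdist (x t, y t, r t) (frontier unit_cube3) < e"
        using infdist_cube[OF i] N t by (auto simp: min_def split: if_splits)
      then show "dist (infdist (x t, y t, r t) (frontier unit_cube3)) 0 < e"
        by (simp add: dist_real_def infdist_nonneg)
    qed
  qed
qed

end
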